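(* Let $v,w:S\to[0,\infty]$ be measurable with $0<\mu_sv<\infty$, $0<\mu_sw<\infty$ for all $s\in S$ and $\frac{\mu_bw}{\mu_bv}=\frac{\mu_{b'}w}{\mu_{b'}v}$ for all $b,b'\in O$. Let $\xi,\eta$ be invariant random measures on $S$ and $m:\Omega\times S\times S\to[0,\infty]$ measurable and invariant. Then $$\mathbb E\iint\Delta_v(s,t)w(s)m(\theta_e,s,t)\,\xi(ds)\,\eta(dt)=\mathbb E\iint w(t)m(\theta_e,s,t)\,\xi(ds)\,\eta(dt),$$ where $\Delta_v(s,t):=\mu_tv/\mu_sv$.
   Context: $G$ is a locally compact second countable Hausdorff group with left Haar measure $\lambda$. $(S,\mathcal S)$ is a Borel space on which $G$ acts measurably and properly (with $\mu_s$ the image of $\lambda$ under $g\mapsto gs$, there is a measurable partition $B_1,B_2,\dots$ of $S$ with $\mu_s(B_n)<\infty$ for all $s,n$). $O\in\mathcal S$ is a fixed system of orbit representatives. $G$ acts measurably on $(\Omega,\mathcal A)$ via $\theta_g$ ($\theta_e$ the identity); $\mathbb P$ is a $\sigma$-finite measure on $\Omega$ with $\mathbb P\circ\theta_g^{-1}=\mathbb P$ and $\mathbb E$ is integration w.r.t. $\mathbb P$ in $\omega$. A random measure is a kernel $\xi$ from $\Omega$ to $S$ with a partition $B_1,B_2,\dots$ of $S$ such that $\xi(B_i)<\infty$ $\mathbb P$-a.e.; invariant: $\xi(\theta_g\omega,B)=\xi(\omega,g^{-1}B)$. $m$ invariant: $m(\theta_g\omega,gs,gt)=m(\omega,s,t)$.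 *)

theory Defs
  imports "HOL-Analysis.Analysis"
begin

text \<open>The group G is a type 'g of class topological_group_add (group written additively:
  g + h is the group product, 0 the neutral element e, - g the inverse).\<close>

definition lcsc_group :: "'g::{topological_group_add, second_countable_topology, t2_space} itself \<Rightarrow> bool" where
  "lcsc_group _ \<longleftrightarrow> locally_compact_space (euclidean :: 'g topology)"

definition left_haar :: "'g::{topological_group_add, second_countable_topology, t2_space} measure \<Rightarrow> bool" where
  "left_haar lam \<longleftrightarrow> sets lam = sets borel
     \<and> (\<forall>g. \<forall>A\<in>sets borel. emeasure lam ((\<lambda>x. g + x) ` A) = emeasure lam A)
     \<and> (\<forall>K. compact K \<longrightarrow> emeasure lam K < \<infinity>)
     \<and> (\<forall>U. open U \<and> U \<noteq> {} \<longrightarrow> emeasure lam U > 0)"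

definition borel_space :: "'s measure \<Rightarrow> bool" where
  "borel_space S \<longleftrightarrow> (\<exists>A f h. A \<in> sets (borel :: real measure) \<and> A \<subseteq> {0..1}
      \<and> f \<in> measurable S (restrict_space borel A) \<and> h \<in> measurable (restrict_space borel A) S
      \<and> (\<forall>x\<in>space S. h (f x) = x) \<and> (\<forall>y\<in>A. f (h y) = y))"

definition measurable_action :: "'g::{topological_group_add, second_countable_topology, t2_space} itself
     \<Rightarrow> 'a measure \<Rightarrow> ('g \<Rightarrow> 'a \<Rightarrow> 'a) \<Rightarrow> bool" where
  "measurable_action _ M act \<longleftrightarrow>
     (\<lambda>(g, x). act g x) \<in> measurable ((borel :: 'g measure) \<Otimes>\<^sub>M M) M
     \<and> (\<forall>x\<in>space M. act 0 x = x)
     \<and> (\<forall>g h. \<forall>x\<in>space M. act (g + h) x = act g (act h x))"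

definition orbit_measure :: "'g measure \<Rightarrow> 's measure \<Rightarrow> ('g \<Rightarrow> 's \<Rightarrow> 's) \<Rightarrow> 's \<Rightarrow> 's measure" where
  "orbit_measure lam S act s = distr lam S (\<lambda>g. act g s)"

definition measurable_partition :: "'s measure \<Rightarrow> (nat \<Rightarrow> 's set) \<Rightarrow> bool" where
  "measurable_partition S B \<longleftrightarrow> (\<forall>n. B n \<in> sets S) \<and> disjoint_family B \<and> (\<Union>n. B n) = space S"

definition proper_action :: "'g measure \<Rightarrow> 's measure \<Rightarrow> ('g \<Rightarrow> 's \<Rightarrow> 's) \<Rightarrow> bool" where
  "proper_action lam S act \<longleftrightarrow> (\<exists>B. measurable_partition S B
      \<and> (\<forall>s\<in>space S. \<forall>n. emeasure (orbit_measure lam S act s) (B n) < \<infinity>))"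

definition orbit_representatives :: "'s measure \<Rightarrow> ('g \<Rightarrow> 's \<Rightarrow> 's) \<Rightarrow> 's set \<Rightarrow> bool" where
  "orbit_representatives S act R \<longleftrightarrow> R \<in> sets S
      \<and> (\<forall>s\<in>space S. \<exists>!b. b \<in> R \<and> (\<exists>g. act g s = b))"

definition random_measure :: "'w measure \<Rightarrow> 's measure \<Rightarrow> ('w \<Rightarrow> 's measure) \<Rightarrow> bool" where
  "random_measure P S \<xi> \<longleftrightarrow>
     (\<forall>\<omega>\<in>space P. sets (\<xi> \<omega>) = sets S)
     \<and> (\<forall>B\<in>sets S. (\<lambda>\<omega>. emeasure (\<xi> \<omega>) B) \<in> borel_measurable P)
     \<and> (\<exists>B. measurable_partition S B \<and> (\<forall>i. AE \<omega> in P. emeasure (\<xi> \<omega>) (B i) < \<infinity>))"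

definition invariant_random_measure ::
  "'w measure \<Rightarrow> 's measure \<Rightarrow> ('g \<Rightarrow> 'w \<Rightarrow> 'w) \<Rightarrow> ('g \<Rightarrow> 's \<Rightarrow> 's) \<Rightarrow> ('w \<Rightarrow> 's measure) \<Rightarrow> bool" where
  "invariant_random_measure P S \<theta> act \<xi> \<longleftrightarrow> random_measure P S \<xi>
     \<and> (\<forall>g. \<forall>\<omega>\<in>space P. \<forall>B\<in>sets S.
          emeasure (\<xi> (\<theta> g \<omega>)) B = emeasure (\<xi> \<omega>) {s\<in>space S. act g s \<in> B})"

definition invariant_kernel_fn ::
  "'w measure \<Rightarrow> 's measure \<Rightarrow> ('g \<Rightarrow> 'w \<Rightarrow> 'w) \<Rightarrow> ('g \<Rightarrow> 's \<Rightarrow> 's) \<Rightarrow> ('w \<Rightarrow> 's \<Rightarrow> 's \<Rightarrow> ennreal) \<Rightarrow> bool" where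
  "invariant_kernel_fn P S \<theta> act m \<longleftrightarrow>
     (\<lambda>(\<omega>, s, t). m \<omega> s t) \<in> borel_measurable (P \<Otimes>\<^sub>M S \<Otimes>\<^sub>M S)
     \<and> (\<forall>g. \<forall>\<omega>\<in>space P. \<forall>s\<in>space S. \<forall>t\<in>space S. m (\<theta> g \<omega>) (act g s) (act g t) = m \<omega> s t)"

definition Delta :: "'g measure \<Rightarrow> 's measure \<Rightarrow> ('g \<Rightarrow> 's \<Rightarrow> 's) \<Rightarrow> ('s \<Rightarrow> ennreal) \<Rightarrow> 's \<Rightarrow> 's \<Rightarrow> ennreal" where
  "Delta lam S act v s t =
     (\<integral>\<^sup>+ x. v x \<partial>orbit_measure lam S act t) / (\<integral>\<^sup>+ x. v x \<partial>orbit_measure lam S act s)"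

end

theory Submission
  imports Defs "HOL-Probability.Giry_Monad"
begin


lemma ennreal_mult_inverse_self: "(a::ennreal) \<noteq> 0 \<Longrightarrow> a < \<infinity> \<Longrightarrow> a * inverse a = 1"
  using divide_ennreal_def ennreal_divide_self by auto

lemma KM:
  fixes \<kappa> :: "'x \<Rightarrow> 's measure"
  assumes sets_k: "\<And>x. x \<in> space X \<Longrightarrow> sets (\<kappa> x) = sets S"
    and meas_k: "\<And>A. A \<in> sets S \<Longrightarrow> (\<lambda>x. emeasure (\<kappa> x) A) \<in> borel_measurable X"
    and part: "measurable_partition S B"
    and fin: "\<And>x i. x \<in> space X \<Longrightarrow> emeasure (\<kappa> x) (B i) < \<infinity>"
    and f: "(\<lambda>(x,s). f x s) \<in> borel_measurable (X \<Otimes>\<^sub>M S)"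
  shows "(\<lambda>x. \<integral>\<^sup>+s. f x s \<partial>\<kappa> x) \<in> borel_measurable X"
proof (cases "space S = {}")
  case True
  have "\<And>x. x \<in> space X \<Longrightarrow> (\<integral>\<^sup>+s. f x s \<partial>\<kappa> x) = 0"
    using sets_eq_imp_space_eq[OF sets_k] True by (simp add: nn_integral_empty)
  then show ?thesis by (subst measurable_cong[where g="\<lambda>_. 0"]) auto
next
  case ne: False
  have Bs: "\<And>i. B i \<in> sets S" and dj: "disjoint_family B" and cov: "(\<Union>i. B i) = space S"
    using part unfolding measurable_partition_def by auto
  define c where "c i x = emeasure (\<kappa> x) (B i)" for i x
  define K where "K i x = scale_measure (inverse (c i x)) (density (\<kappa> x) (indicator (B i)))" for i x
  have fx: "(\<lambda>s. f x s) \<in> borel_measurable (\<kappa> x)" if "x \<in> space X" for x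
  proof -
    have "(\<lambda>s. f x s) \<in> borel_measurable S"
      using measurable_Pair2[OF f that] by simp
    then show ?thesis using measurable_cong_sets[OF sets_k[OF that] refl] by blast
  qed
  have indB: "indicator (B i) \<in> borel_measurable (\<kappa> x)" if "x \<in> space X" for i x
    using Bs sets_k[OF that] by (simp add: borel_measurable_indicator)
  have emK: "emeasure (K i x) A = inverse (c i x) * emeasure (\<kappa> x) (B i \<inter> A)"
    if x: "x \<in> space X" and A: "A \<in> sets S" for i x A
  proof -
    have A': "A \<in> sets (\<kappa> x)" using A sets_k[OF x] by simp
    have B': "B i \<in> sets (\<kappa> x)" using Bs sets_k[OF x] by simp
    have "emeasure (density (\<kappa> x) (indicator (B i))) A = (\<integral>\<^sup>+s. indicator (B i \<inter> A) s \<partial>\<kappa> x)"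
      by (subst emeasure_density[OF indB[OF x] A']) (auto intro!: nn_integral_cong simp: indicator_def)
    also have "\<dots> = emeasure (\<kappa> x) (B i \<inter> A)" using A' B' by simp
    finally show ?thesis unfolding K_def by simp
  qed
  have subK: "subprob_space (K i x)" if x: "x \<in> space X" for i x
  proof (rule subprob_spaceI)
    have sp: "space (K i x) = space S" unfolding K_def using sets_eq_imp_space_eq[OF sets_k[OF x]] by (simp add: space_scale_measure)
    have "emeasure (K i x) (space (K i x)) = inverse (c i x) * c i x"
      unfolding sp using emK[OF x, of "space S" i] Bs[of i] sets.sets_into_space[of "B i" S]
      by (simp add: c_def Int_absorb2)
    also have "\<dots> \<le> 1"
      using fin[OF x, of i] by (cases "c i x = 0") (auto simp: c_def ennreal_mult_inverse_self mult.commute)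
    finally show "emeasure (K i x) (space (K i x)) \<le> 1" .
    show "space (K i x) \<noteq> {}" using ne sp by simp
  qed
  have Kmeas: "K i \<in> measurable X (subprob_algebra S)" for i
  proof (rule measurable_subprob_algebra)
    fix x assume x: "x \<in> space X"
    show "subprob_space (K i x)" by (rule subK[OF x])
    show "sets (K i x) = sets S" unfolding K_def using sets_k[OF x] by simp
  next
    fix A assume A: "A \<in> sets S"
    have m1[measurable]: "(\<lambda>x. emeasure (\<kappa> x) (B i)) \<in> borel_measurable X" using meas_k Bs by auto
    have m2[measurable]: "(\<lambda>x. emeasure (\<kappa> x) (B i \<inter> A)) \<in> borel_measurable X" using meas_k Bs A by auto
    have "(\<lambda>x. inverse (c i x) * emeasure (\<kappa> x) (B i \<inter> A)) \<in> borel_measurable X"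
      unfolding c_def by measurable
    then show "(\<lambda>x. emeasure (K i x) A) \<in> borel_measurable X"
      by (rule measurable_cong[THEN iffD1, rotated]) (simp add: emK A)
  qed
  have eq: "(\<integral>\<^sup>+s. f x s \<partial>\<kappa> x) = (\<Sum>i. c i x * (\<integral>\<^sup>+s. f x s \<partial>K i x))" if x: "x \<in> space X" for x
  proof -
    have sp: "space (\<kappa> x) = space S" using sets_eq_imp_space_eq[OF sets_k[OF x]] .
    have "(\<integral>\<^sup>+s. f x s \<partial>\<kappa> x) = (\<integral>\<^sup>+s. (\<Sum>i. f x s * indicator (B i) s) \<partial>\<kappa> x)"
    proof (rule nn_integral_cong)
      fix s assume "s \<in> space (\<kappa> x)"
      then obtain i where "s \<in> B i" using cov sp by auto
      then show "f x s = (\<Sum>i. f x s * indicator (B i) s)"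
        using suminf_cmult_indicator[OF dj, of s i "\<lambda>_. f x s"] by simp
    qed
    also have "\<dots> = (\<Sum>i. \<integral>\<^sup>+s. f x s * indicator (B i) s \<partial>\<kappa> x)"
      by (rule nn_integral_suminf) (use fx[OF x] indB[OF x] in \<open>auto intro!: borel_measurable_times_ennreal\<close>)
    also have "\<dots> = (\<Sum>i. c i x * (\<integral>\<^sup>+s. f x s \<partial>K i x))"
    proof (rule suminf_cong)
      fix i
      have "(\<integral>\<^sup>+s. f x s \<partial>K i x) = inverse (c i x) * (\<integral>\<^sup>+s. indicator (B i) s * f x s \<partial>\<kappa> x)"
        unfolding K_def using fx[OF x] indB[OF x] nn_integral_density[OF indB[OF x] fx[OF x], of i]
        by (simp add: nn_integral_scale_measure)
      moreover have "(\<integral>\<^sup>+s. f x s * indicator (B i) s \<partial>\<kappa> x) = c i x * (inverse (c i x) * (\<integral>\<^sup>+s. indicator (B i) s * f x s \<partial>\<kappa> x))"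
      proof (cases "c i x = 0")
        case True
        have "B i \<in> null_sets (\<kappa> x)" using True Bs sets_k[OF x] by (simp add: c_def null_sets_def)
        then show ?thesis using nn_integral_null_set[of "B i" "\<kappa> x" "f x"] True by simp
      next
        case False
        then have "c i x * inverse (c i x) = 1" using fin[OF x, of i] by (simp add: c_def ennreal_mult_inverse_self)
        then show ?thesis by (simp add: mult.assoc[symmetric] mult.commute)
      qed
      ultimately show "(\<integral>\<^sup>+s. f x s * indicator (B i) s \<partial>\<kappa> x) = c i x * (\<integral>\<^sup>+s. f x s \<partial>K i x)" by simp
    qed
    finally show ?thesis .
  qed
  have "(\<lambda>x. \<Sum>i. c i x * (\<integral>\<^sup>+s. f x s \<partial>K i x)) \<in> borel_measurable X"
  proof -
    have [measurable]: "(\<lambda>x. emeasure (\<kappa> x) (B i)) \<in> borel_measurable X" for i using meas_k Bs by auto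
    have [measurable]: "(\<lambda>x. \<integral>\<^sup>+s. f x s \<partial>K i x) \<in> borel_measurable X" for i
      using nn_integral_measurable_subprob_algebra2[OF f Kmeas] .
    show ?thesis unfolding c_def by measurable
  qed
  then show ?thesis by (rule measurable_cong[THEN iffD1, rotated]) (simp add: eq)
qed



locale gset =
  fixes lam :: "'g::{topological_group_add, second_countable_topology, t2_space} measure"
    and S :: "'s measure" and act :: "'g \<Rightarrow> 's \<Rightarrow> 's"
  assumes G: "lcsc_group TYPE('g)"
    and haar: "left_haar lam"
    and act: "measurable_action TYPE('g) S act"
begin

lemma sets_lam[measurable_cong]: "sets lam = sets borel"
  using haar unfolding left_haar_def by simp

lemma space_lam[simp]: "space lam = UNIV"
  using sets_eq_imp_space_eq[OF sets_lam] by simp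

lemma add_meas[measurable]: "(\<lambda>(g::'g, h). g + h) \<in> borel_measurable (borel \<Otimes>\<^sub>M borel)"
proof -
  have "(\<lambda>(g::'g, h). g + h) \<in> borel_measurable (borel :: ('g \<times> 'g) measure)"
    by (intro borel_measurable_continuous_onI) (auto intro!: continuous_intros simp: case_prod_beta')
  then show ?thesis by (simp add: borel_prod)
qed

lemma uminus_meas[measurable]: "(\<lambda>g::'g. - g) \<in> borel_measurable borel"
  by (intro borel_measurable_continuous_onI continuous_intros)

lemma act_meas[measurable]: "(\<lambda>(g, x). act g x) \<in> measurable (borel \<Otimes>\<^sub>M S) S"
  using act unfolding measurable_action_def by simp

lemma act_0: "x \<in> space S \<Longrightarrow> act 0 x = x"
  using act unfolding measurable_action_def by simp

lemma act_add: "x \<in> space S \<Longrightarrow> act (g + h) x = act g (act h x)"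
  using act unfolding measurable_action_def by simp

lemma act_space: "x \<in> space S \<Longrightarrow> act g x \<in> space S"
  using measurable_space[OF act_meas, of "(g,x)"] by (simp add: space_pair_measure)

lemma act_inv: "x \<in> space S \<Longrightarrow> act g (act (-g) x) = x"
  using act_add[of x g "-g"] act_0 by simp

lemma sigma_finite_lam: "sigma_finite_measure lam"
proof
  have lc: "locally_compact_space (euclidean :: 'g topology)" using G unfolding lcsc_group_def by simp
  have "\<forall>x::'g. \<exists>U K. open U \<and> compact K \<and> x \<in> U \<and> U \<subseteq> K"
    using lc unfolding locally_compact_space_def by simp
  then obtain U K where UK: "\<And>x::'g. open (U x) \<and> compact (K x) \<and> x \<in> U x \<and> U x \<subseteq> K x"
    by metis
  obtain F where F: "F \<subseteq> range U" "countable F" "\<Union>F = \<Union>(range U)"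
    using Lindelof[of "range U"] UK by blast
  have "\<Union>(range U) = UNIV" using UK by blast
  moreover have "\<forall>a\<in>F. emeasure lam a \<noteq> \<infinity>"
  proof
    fix a assume "a \<in> F"
    then obtain x where a: "a = U x" using F by auto
    have "emeasure lam a \<le> emeasure lam (K x)"
      using a UK[of x] by (intro emeasure_mono) (auto simp: sets_lam intro: borel_closed compact_imp_closed)
    also have "\<dots> < \<infinity>" using haar UK[of x] unfolding left_haar_def by blast
    finally show "emeasure lam a \<noteq> \<infinity>" by simp
  qed
  moreover have "F \<subseteq> sets lam" using F UK by (auto simp: sets_lam)
  ultimately show "\<exists>A. countable A \<and> A \<subseteq> sets lam \<and> \<Union>A = space lam \<and> (\<forall>a\<in>A. emeasure lam a \<noteq> \<infinity>)"
    using F by auto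
qed

sublocale lam: sigma_finite_measure lam by (rule sigma_finite_lam)

lemma distr_trans: "distr lam lam (\<lambda>x. h + x) = lam"
proof (rule measure_eqI)
  show "sets (distr lam lam (\<lambda>x. h + x)) = sets lam" by simp
next
  fix A assume A: "A \<in> sets (distr lam lam (\<lambda>x. h + x))"
  then have A': "A \<in> sets borel" by (simp add: sets_lam)
  have m: "(\<lambda>x. h + x) \<in> measurable lam lam" by (simp add: measurable_cong_sets[OF sets_lam sets_lam])
  have "(\<lambda>x. h + x) -` A \<inter> space lam = (\<lambda>x. -h + x) ` A"
    by (auto simp: image_iff) (metis add_minus_cancel)
  then have "emeasure (distr lam lam (\<lambda>x. h + x)) A = emeasure lam ((\<lambda>x. -h + x) ` A)"
    using A by (simp add: emeasure_distr[OF m])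
  also have "\<dots> = emeasure lam A" using haar A' unfolding left_haar_def by blast
  finally show "emeasure (distr lam lam (\<lambda>x. h + x)) A = emeasure lam A" .
qed

lemma nn_trans:
  assumes f: "f \<in> borel_measurable borel"
  shows "(\<integral>\<^sup>+x. f (h + x) \<partial>lam) = (\<integral>\<^sup>+x. f x \<partial>lam)"
proof -
  have m: "(\<lambda>x. h + x) \<in> measurable lam lam" by (simp add: measurable_cong_sets[OF sets_lam sets_lam])
  have "(\<integral>\<^sup>+x. f x \<partial>lam) = (\<integral>\<^sup>+x. f x \<partial>distr lam lam (\<lambda>x. h + x))" by (simp add: distr_trans)
  also have "\<dots> = (\<integral>\<^sup>+x. f (h + x) \<partial>lam)"
    by (rule nn_integral_distr[OF m]) (simp add: measurable_cong_sets[OF sets_lam] f)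
  finally show ?thesis ..
qed

end


context gset begin

lemma act_meas'[measurable (raw)]:
  "f \<in> measurable M borel \<Longrightarrow> g \<in> measurable M S \<Longrightarrow> (\<lambda>x. act (f x) (g x)) \<in> measurable M S"
  using measurable_compose[OF measurable_Pair act_meas, of f M g] by simp

lemma add_meas'[measurable (raw)]:
  "f \<in> measurable M borel \<Longrightarrow> g \<in> measurable M borel \<Longrightarrow> (\<lambda>x. f x + g x :: 'g) \<in> measurable M borel"
  using measurable_compose[OF measurable_Pair add_meas, of f M g] by simp

lemma uminus_meas'[measurable (raw)]:
  "f \<in> measurable M borel \<Longrightarrow> (\<lambda>x. - f x :: 'g) \<in> measurable M borel"
  using measurable_compose[OF _ uminus_meas, of f M] by simp

definition mu :: "('s \<Rightarrow> ennreal) \<Rightarrow> 's \<Rightarrow> ennreal" where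
  "mu f s = (\<integral>\<^sup>+g. f (act g s) \<partial>lam)"

lemma mu_meas[measurable]:
  assumes [measurable]: "f \<in> borel_measurable S"
  shows "mu f \<in> borel_measurable S"
  unfolding mu_def by measurable

lemma orbit_nn:
  assumes f[measurable]: "f \<in> borel_measurable S" and s: "s \<in> space S"
  shows "(\<integral>\<^sup>+x. f x \<partial>orbit_measure lam S act s) = mu f s"
  unfolding orbit_measure_def mu_def
  by (rule nn_integral_distr) (use s in measurable)

lemma nu_inv:
  assumes p[measurable]: "p \<in> borel_measurable S" and s: "s \<in> space S"
  shows "(\<integral>\<^sup>+g. p (act (-g) (act h s)) \<partial>lam) = (\<integral>\<^sup>+g. p (act (-g) s) \<partial>lam)"
proof -
  have "(\<integral>\<^sup>+g. p (act (-g) (act h s)) \<partial>lam) = (\<integral>\<^sup>+g. p (act (-(h + g)) (act h s)) \<partial>lam)"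
    by (rule nn_trans[symmetric]) (use s in measurable)
  also have "\<dots> = (\<integral>\<^sup>+g. p (act (-g) s) \<partial>lam)"
    using s by (simp add: act_add[symmetric] minus_add add.assoc)
  finally show ?thesis .
qed

lemma lemmaN:
  assumes v[measurable]: "v \<in> borel_measurable S" and w[measurable]: "w \<in> borel_measurable S"
    and vpos: "\<And>s. s \<in> space S \<Longrightarrow> 0 < mu v s \<and> mu v s < \<infinity>"
    and s: "s \<in> space S"
  shows "mu w s = mu v s * (\<integral>\<^sup>+g. w (act (-g) s) / mu v (act (-g) s) \<partial>lam)"
proof -
  interpret pair_sigma_finite lam lam by unfold_locales
  define \<phi> where "\<phi> x = w (act x s) / mu v (act x s)" for x
  have \<phi>m[measurable]: "\<phi> \<in> borel_measurable borel" unfolding \<phi>_def using s by measurable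
  have "mu w s = (\<integral>\<^sup>+x. \<phi> x * mu v (act x s) \<partial>lam)"
    unfolding mu_def[of w]
  proof (rule nn_integral_cong)
    fix x
    have "act x s \<in> space S" using s by (rule act_space)
    then have "mu v (act x s) \<noteq> 0" "mu v (act x s) < \<infinity>" using vpos[of "act x s"] by auto
    then have "inverse (mu v (act x s)) * mu v (act x s) = 1"
      by (simp add: ennreal_mult_inverse_self mult.commute)
    then show "w (act x s) = \<phi> x * mu v (act x s)"
      unfolding \<phi>_def divide_ennreal_def by (simp add: mult.assoc)
  qed
  also have "\<dots> = (\<integral>\<^sup>+x. \<integral>\<^sup>+h. \<phi> x * v (act (h + x) s) \<partial>lam \<partial>lam)"
  proof (rule nn_integral_cong)
    fix x
    have "mu v (act x s) = (\<integral>\<^sup>+h. v (act (h + x) s) \<partial>lam)"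
      unfolding mu_def using s by (simp add: act_add)
    moreover have "(\<lambda>h. v (act (h + x) s)) \<in> borel_measurable lam" using s by measurable
    ultimately show "\<phi> x * mu v (act x s) = (\<integral>\<^sup>+h. \<phi> x * v (act (h + x) s) \<partial>lam)"
      by (simp add: nn_integral_cmult)
  qed
  also have "\<dots> = (\<integral>\<^sup>+h. \<integral>\<^sup>+x. \<phi> x * v (act (h + x) s) \<partial>lam \<partial>lam)"
    by (rule Fubini'[symmetric]) (use s in measurable)
  also have "\<dots> = (\<integral>\<^sup>+h. \<integral>\<^sup>+x. \<phi> (-h + x) * v (act x s) \<partial>lam \<partial>lam)"
  proof (rule nn_integral_cong)
    fix h
    have "(\<integral>\<^sup>+x. \<phi> (-h + x) * v (act x s) \<partial>lam) = (\<integral>\<^sup>+x. \<phi> (-h + (h + x)) * v (act (h + x) s) \<partial>lam)"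
      by (rule nn_trans[symmetric]) (use s in measurable)
    then show "(\<integral>\<^sup>+x. \<phi> x * v (act (h + x) s) \<partial>lam) = (\<integral>\<^sup>+x. \<phi> (-h + x) * v (act x s) \<partial>lam)"
      by (simp add: add.assoc[symmetric])
  qed
  also have "\<dots> = (\<integral>\<^sup>+x. \<integral>\<^sup>+h. \<phi> (-h + x) * v (act x s) \<partial>lam \<partial>lam)"
    by (rule Fubini') (use s in measurable)
  also have "\<dots> = (\<integral>\<^sup>+x. v (act x s) * (\<integral>\<^sup>+h. \<phi> (-h) \<partial>lam) \<partial>lam)"
  proof (rule nn_integral_cong)
    fix x
    have "(\<integral>\<^sup>+h. \<phi> (-h + x) \<partial>lam) = (\<integral>\<^sup>+h. \<phi> (-(x + h) + x) \<partial>lam)"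
      by (rule nn_trans[symmetric]) measurable
    also have "\<dots> = (\<integral>\<^sup>+h. \<phi> (-h) \<partial>lam)" by (simp add: minus_add add.assoc)
    finally have "(\<integral>\<^sup>+h. \<phi> (-h + x) \<partial>lam) = (\<integral>\<^sup>+h. \<phi> (-h) \<partial>lam)" .
    then show "(\<integral>\<^sup>+h. \<phi> (-h + x) * v (act x s) \<partial>lam) = v (act x s) * (\<integral>\<^sup>+h. \<phi> (-h) \<partial>lam)"
      by (subst nn_integral_multc) (simp_all add: mult.commute)
  qed
  also have "\<dots> = mu v s * (\<integral>\<^sup>+h. \<phi> (-h) \<partial>lam)"
  proof -
    have "(\<lambda>x. v (act x s)) \<in> borel_measurable lam" using s by measurable
    then show ?thesis unfolding mu_def by (simp add: nn_integral_multc)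
  qed
  finally show ?thesis unfolding \<phi>_def .
qed

end


definition rpart :: "'w measure \<Rightarrow> 's measure \<Rightarrow> ('w \<Rightarrow> 's measure) \<Rightarrow> nat \<Rightarrow> 's set" where
  "rpart P S \<kappa> = (SOME B. measurable_partition S B \<and> (\<forall>i. AE \<omega> in P. emeasure (\<kappa> \<omega>) (B i) < \<infinity>))"

definition good :: "'w measure \<Rightarrow> 's measure \<Rightarrow> ('w \<Rightarrow> 's measure) \<Rightarrow> 'w set" where
  "good P S \<kappa> = {\<omega> \<in> space P. \<forall>i. emeasure (\<kappa> \<omega>) (rpart P S \<kappa> i) < \<infinity>}"

definition kmod :: "'w measure \<Rightarrow> 's measure \<Rightarrow> ('w \<Rightarrow> 's measure) \<Rightarrow> 'w \<Rightarrow> 's measure" where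
  "kmod P S \<kappa> \<omega> = (if \<omega> \<in> good P S \<kappa> then \<kappa> \<omega> else null_measure S)"

context
  fixes P :: "'w measure" and S :: "'s measure" and \<kappa> :: "'w \<Rightarrow> 's measure"
  assumes rm: "random_measure P S \<kappa>"
begin

lemma rpart: "measurable_partition S (rpart P S \<kappa>)" "\<And>i. AE \<omega> in P. emeasure (\<kappa> \<omega>) (rpart P S \<kappa> i) < \<infinity>"
proof -
  have "\<exists>B. measurable_partition S B \<and> (\<forall>i. AE \<omega> in P. emeasure (\<kappa> \<omega>) (B i) < \<infinity>)"
    using rm unfolding random_measure_def by blast
  from someI_ex[OF this] show "measurable_partition S (rpart P S \<kappa>)" "\<And>i. AE \<omega> in P. emeasure (\<kappa> \<omega>) (rpart P S \<kappa> i) < \<infinity>"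
    unfolding rpart_def by auto
qed

lemma rpart_sets: "rpart P S \<kappa> i \<in> sets S"
  using rpart(1) unfolding measurable_partition_def by auto

lemma k_sets: "\<omega> \<in> space P \<Longrightarrow> sets (\<kappa> \<omega>) = sets S"
  using rm unfolding random_measure_def by auto

lemma k_space: "\<omega> \<in> space P \<Longrightarrow> space (\<kappa> \<omega>) = space S"
  using sets_eq_imp_space_eq[OF k_sets] .

lemma k_meas: "A \<in> sets S \<Longrightarrow> (\<lambda>\<omega>. emeasure (\<kappa> \<omega>) A) \<in> borel_measurable P"
  using rm unfolding random_measure_def by auto

lemma good_sets: "good P S \<kappa> \<in> sets P"
proof -
  have "good P S \<kappa> = (\<Inter>i. {\<omega> \<in> space P. emeasure (\<kappa> \<omega>) (rpart P S \<kappa> i) < \<infinity>})"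
    unfolding good_def by auto
  also have "\<dots> \<in> sets P"
    using k_meas[OF rpart_sets] by (intro sets.countable_INT') (auto simp: pred_def[symmetric])
  finally show ?thesis .
qed

lemma AE_good: "AE \<omega> in P. \<omega> \<in> good P S \<kappa>"
proof -
  have "AE \<omega> in P. \<forall>i. emeasure (\<kappa> \<omega>) (rpart P S \<kappa> i) < \<infinity>"
    using rpart(2) by (simp add: AE_all_countable)
  then show ?thesis unfolding good_def by (auto elim!: AE_mp intro!: AE_I2)
qed

lemma kmod_sets: "sets (kmod P S \<kappa> \<omega>) = sets S"
  unfolding kmod_def good_def by (auto simp: k_sets)

lemma kmod_meas: "A \<in> sets S \<Longrightarrow> (\<lambda>\<omega>. emeasure (kmod P S \<kappa> \<omega>) A) \<in> borel_measurable P"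
proof -
  assume A: "A \<in> sets S"
  have "(\<lambda>\<omega>. if \<omega> \<in> good P S \<kappa> then emeasure (\<kappa> \<omega>) A else 0) \<in> borel_measurable P"
    using good_sets k_meas[OF A] by (intro measurable_If_set) auto
  then show ?thesis unfolding kmod_def by (rule measurable_cong[THEN iffD1, rotated]) simp
qed

lemma kmod_fin: "emeasure (kmod P S \<kappa> \<omega>) (rpart P S \<kappa> i) < \<infinity>"
  unfolding kmod_def good_def by auto

lemma good_sigma_finite: "\<omega> \<in> good P S \<kappa> \<Longrightarrow> sigma_finite_measure (\<kappa> \<omega>)"
proof (unfold_locales, intro exI conjI)
  assume g: "\<omega> \<in> good P S \<kappa>"
  then have sp: "\<omega> \<in> space P" unfolding good_def by auto
  show "countable (range (rpart P S \<kappa>))" by simp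
  show "range (rpart P S \<kappa>) \<subseteq> sets (\<kappa> \<omega>)" using rpart_sets k_sets[OF sp] by auto
  show "\<Union>(range (rpart P S \<kappa>)) = space (\<kappa> \<omega>)" using rpart(1) k_space[OF sp]
    unfolding measurable_partition_def by auto
  show "\<forall>a\<in>range (rpart P S \<kappa>). emeasure (\<kappa> \<omega>) a \<noteq> \<infinity>" using g unfolding good_def by (auto simp: less_top)
qed

lemma KMk:
  assumes pi: "\<pi> \<in> measurable X P" and f: "(\<lambda>(x,s). f x s) \<in> borel_measurable (X \<Otimes>\<^sub>M S)"
  shows "(\<lambda>x. \<integral>\<^sup>+s. f x s \<partial>kmod P S \<kappa> (\<pi> x)) \<in> borel_measurable X"
  by (rule KM[OF kmod_sets _ rpart(1) kmod_fin f])
     (rule measurable_compose[OF pi kmod_meas])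

lemma KMc:
  assumes g: "\<omega> \<in> good P S \<kappa>" and f: "(\<lambda>(x,s). f x s) \<in> borel_measurable (X \<Otimes>\<^sub>M S)"
  shows "(\<lambda>x. \<integral>\<^sup>+s. f x s \<partial>\<kappa> \<omega>) \<in> borel_measurable X"
proof -
  have sp: "\<omega> \<in> space P" using g unfolding good_def by auto
  show ?thesis
    by (rule KM[OF k_sets[OF sp] _ rpart(1) _ f]) (use g in \<open>auto simp: good_def\<close>)
qed

end



lemma meas3_rule:
  assumes Fm: "(\<lambda>(x,s,t). F x s t) \<in> borel_measurable (X \<Otimes>\<^sub>M S \<Otimes>\<^sub>M T)"
    and f: "f \<in> measurable M X" and g: "g \<in> measurable M S" and h: "h \<in> measurable M T"
  shows "(\<lambda>y. F (f y) (g y) (h y)) \<in> borel_measurable M"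
  using measurable_compose[OF measurable_Pair[OF f measurable_Pair[OF g h]] Fm] by simp

locale rset = gset lam S act
  for lam :: "'g::{topological_group_add, second_countable_topology, t2_space} measure"
    and S :: "'s measure" and act +
  fixes P :: "'w measure" and \<theta> :: "'g \<Rightarrow> 'w \<Rightarrow> 'w" and \<xi> \<eta> :: "'w \<Rightarrow> 's measure"
    and m :: "'w \<Rightarrow> 's \<Rightarrow> 's \<Rightarrow> ennreal"
  assumes \<theta>: "measurable_action TYPE('g) P \<theta>"
    and P_sigma: "sigma_finite_measure P"
    and P_inv: "\<And>g. distr P P (\<theta> g) = P"
    and \<xi>: "invariant_random_measure P S \<theta> act \<xi>"
    and \<eta>: "invariant_random_measure P S \<theta> act \<eta>"
    and m: "invariant_kernel_fn P S \<theta> act m"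
begin

sublocale P: sigma_finite_measure P by (rule P_sigma)

lemma \<theta>_meas: "(\<lambda>(g, x). \<theta> g x) \<in> measurable (borel \<Otimes>\<^sub>M P) P"
  using \<theta> unfolding measurable_action_def by simp

lemma \<theta>_meas'[measurable (raw)]:
  "f \<in> measurable M borel \<Longrightarrow> g \<in> measurable M P \<Longrightarrow> (\<lambda>x. \<theta> (f x) (g x)) \<in> measurable M P"
  using measurable_compose[OF measurable_Pair \<theta>_meas, of f M g] by simp

lemma act_g_meas: "act g \<in> measurable S S"
  using act_meas'[of "\<lambda>_. g" S "\<lambda>x. x"] by simp

lemma \<theta>g_meas: "\<theta> g \<in> measurable P P" by measurable

lemma m_meas: "(\<lambda>(\<omega>, s, t). m \<omega> s t) \<in> borel_measurable (P \<Otimes>\<^sub>M S \<Otimes>\<^sub>M S)"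
  using m unfolding invariant_kernel_fn_def by simp

lemma m_meas'[measurable (raw)]:
  "f \<in> measurable M P \<Longrightarrow> g \<in> measurable M S \<Longrightarrow> h \<in> measurable M S \<Longrightarrow> (\<lambda>x. m (f x) (g x) (h x)) \<in> borel_measurable M"
  by (rule meas3_rule[OF m_meas])

lemma m_inv: "\<omega> \<in> space P \<Longrightarrow> s \<in> space S \<Longrightarrow> t \<in> space S \<Longrightarrow> m (\<theta> g \<omega>) (act g s) (act g t) = m \<omega> s t"
  using m unfolding invariant_kernel_fn_def by simp

lemma rm\<xi>: "random_measure P S \<xi>" using \<xi> unfolding invariant_random_measure_def by simp
lemma rm\<eta>: "random_measure P S \<eta>" using \<eta> unfolding invariant_random_measure_def by simp

lemma shift:
  assumes inv: "invariant_random_measure P S \<theta> act \<kappa>" and \<omega>: "\<omega> \<in> space P"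
  shows "\<kappa> (\<theta> g \<omega>) = distr (\<kappa> \<omega>) S (act g)"
proof -
  have rm: "random_measure P S \<kappa>" using inv unfolding invariant_random_measure_def by simp
  have \<theta>\<omega>: "\<theta> g \<omega> \<in> space P" using \<omega> \<theta>g_meas[of g] by (auto simp: measurable_def)
  have ag: "act g \<in> measurable (\<kappa> \<omega>) S"
    by (subst measurable_cong_sets[OF k_sets[OF rm \<omega>] refl]) (rule act_g_meas)
  show ?thesis
  proof (rule measure_eqI)
    show "sets (\<kappa> (\<theta> g \<omega>)) = sets (distr (\<kappa> \<omega>) S (act g))" using k_sets[OF rm \<theta>\<omega>] by simp
  next
    fix A assume "A \<in> sets (\<kappa> (\<theta> g \<omega>))"
    then have A: "A \<in> sets S" using k_sets[OF rm \<theta>\<omega>] by simp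
    have "emeasure (\<kappa> (\<theta> g \<omega>)) A = emeasure (\<kappa> \<omega>) {s\<in>space S. act g s \<in> A}"
      using inv \<omega> A unfolding invariant_random_measure_def by blast
    also have "\<dots> = emeasure (distr (\<kappa> \<omega>) S (act g)) A"
      using A k_space[OF rm \<omega>] by (simp add: emeasure_distr[OF ag] Int_def conj_commute)
    finally show "emeasure (\<kappa> (\<theta> g \<omega>)) A = emeasure (distr (\<kappa> \<omega>) S (act g)) A" .
  qed
qed

abbreviation "kx \<equiv> kmod P S \<xi>"
abbreviation "ky \<equiv> kmod P S \<eta>"

lemma YM:
  assumes pi: "\<pi> \<in> measurable X P" and Fm: "(\<lambda>(x,s,t). F x s t) \<in> borel_measurable (X \<Otimes>\<^sub>M S \<Otimes>\<^sub>M S)"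
  shows "(\<lambda>x. \<integral>\<^sup>+t. \<integral>\<^sup>+s. F x s t \<partial>kx (\<pi> x) \<partial>ky (\<pi> x)) \<in> borel_measurable X"
proof -
  have "(\<lambda>(y, s). F (fst y) s (snd y)) \<in> borel_measurable ((X \<Otimes>\<^sub>M S) \<Otimes>\<^sub>M S)"
    using meas3_rule[OF Fm, of "\<lambda>p. fst (fst p)" "(X \<Otimes>\<^sub>M S) \<Otimes>\<^sub>M S" "snd" "\<lambda>p. snd (fst p)"]
    by (simp add: case_prod_beta')
  from KMk[OF rm\<xi> measurable_compose[OF measurable_fst pi] this]
  have "(\<lambda>y. \<integral>\<^sup>+s. F (fst y) s (snd y) \<partial>kx (\<pi> (fst y))) \<in> borel_measurable (X \<Otimes>\<^sub>M S)" by simp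
  then have "(\<lambda>(x, t). \<integral>\<^sup>+s. F x s t \<partial>kx (\<pi> x)) \<in> borel_measurable (X \<Otimes>\<^sub>M S)"
    by (simp add: case_prod_beta')
  from KMk[OF rm\<eta> pi this] show ?thesis by simp
qed

lemma E_mod:
  "(\<integral>\<^sup>+\<omega>. \<integral>\<^sup>+t. \<integral>\<^sup>+s. H \<omega> s t \<partial>\<xi> \<omega> \<partial>\<eta> \<omega> \<partial>P) = (\<integral>\<^sup>+\<omega>. \<integral>\<^sup>+t. \<integral>\<^sup>+s. H \<omega> s t \<partial>kx \<omega> \<partial>ky \<omega> \<partial>P)"
  using AE_good[OF rm\<xi>] AE_good[OF rm\<eta>]
  by (intro nn_integral_cong_AE, eventually_elim) (simp add: kmod_def)

lemma AE_shift_good: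
  assumes rm: "random_measure P S \<kappa>"
  shows "AE \<omega> in P. \<theta> g \<omega> \<in> good P S \<kappa>"
proof -
  have tm: "\<theta> g \<in> measurable P P" by measurable
  have "AE \<omega> in distr P P (\<theta> g). \<omega> \<in> good P S \<kappa>" by (subst P_inv) (rule AE_good[OF rm])
  moreover have "{x \<in> space P. x \<in> good P S \<kappa>} = good P S \<kappa>" unfolding good_def by auto
  then have "{x \<in> space P. x \<in> good P S \<kappa>} \<in> sets P" using good_sets[OF rm] by simp
  ultimately show ?thesis using AE_distr_iff[OF tm, of "\<lambda>x. x \<in> good P S \<kappa>"] by blast
qed

lemma IP:
  assumes Hm: "(\<lambda>(\<omega>,s,t). H \<omega> s t) \<in> borel_measurable (P \<Otimes>\<^sub>M S \<Otimes>\<^sub>M S)"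
  shows "(\<integral>\<^sup>+\<omega>. \<integral>\<^sup>+t. \<integral>\<^sup>+s. H \<omega> s t \<partial>\<xi> \<omega> \<partial>\<eta> \<omega> \<partial>P)
       = (\<integral>\<^sup>+\<omega>. \<integral>\<^sup>+t. \<integral>\<^sup>+s. H (\<theta> g \<omega>) (act g s) (act g t) \<partial>\<xi> \<omega> \<partial>\<eta> \<omega> \<partial>P)"
proof -
  define Y where "Y \<omega> = (\<integral>\<^sup>+t. \<integral>\<^sup>+s. H \<omega> s t \<partial>kx \<omega> \<partial>ky \<omega>)" for \<omega>
  have Ym: "Y \<in> borel_measurable P" unfolding Y_def using YM[OF measurable_ident Hm] by simp
  have tm: "\<theta> g \<in> measurable P P" by measurable
  have "(\<integral>\<^sup>+\<omega>. \<integral>\<^sup>+t. \<integral>\<^sup>+s. H \<omega> s t \<partial>\<xi> \<omega> \<partial>\<eta> \<omega> \<partial>P) = (\<integral>\<^sup>+\<omega>. Y \<omega> \<partial>P)"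
    unfolding Y_def by (rule E_mod)
  also have "\<dots> = (\<integral>\<^sup>+\<omega>. Y \<omega> \<partial>distr P P (\<theta> g))" by (simp add: P_inv)
  also have "\<dots> = (\<integral>\<^sup>+\<omega>. Y (\<theta> g \<omega>) \<partial>P)" by (rule nn_integral_distr[OF tm]) (subst P_inv, rule Ym)
  also have "\<dots> = (\<integral>\<^sup>+\<omega>. \<integral>\<^sup>+t. \<integral>\<^sup>+s. H (\<theta> g \<omega>) (act g s) (act g t) \<partial>\<xi> \<omega> \<partial>\<eta> \<omega> \<partial>P)"
  proof (rule nn_integral_cong_AE)
    have "AE \<omega> in P. \<omega> \<in> good P S \<xi> \<and> \<omega> \<in> good P S \<eta> \<and> \<theta> g \<omega> \<in> good P S \<xi> \<and> \<theta> g \<omega> \<in> good P S \<eta>"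
      using AE_good[OF rm\<xi>] AE_good[OF rm\<eta>] AE_shift_good[OF rm\<xi>] AE_shift_good[OF rm\<eta>] by eventually_elim auto
    then show "AE \<omega> in P. Y (\<theta> g \<omega>) = (\<integral>\<^sup>+t. \<integral>\<^sup>+s. H (\<theta> g \<omega>) (act g s) (act g t) \<partial>\<xi> \<omega> \<partial>\<eta> \<omega>)"
    proof (rule AE_mp, intro AE_I2 impI)
      fix \<omega> assume \<omega>: "\<omega> \<in> space P" and gd: "\<omega> \<in> good P S \<xi> \<and> \<omega> \<in> good P S \<eta> \<and> \<theta> g \<omega> \<in> good P S \<xi> \<and> \<theta> g \<omega> \<in> good P S \<eta>"
      have t\<omega>: "\<theta> g \<omega> \<in> space P" using \<omega> tm by (auto simp: measurable_def)
      have agx: "act g \<in> measurable (\<xi> \<omega>) S"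
        by (subst measurable_cong_sets[OF k_sets[OF rm\<xi> \<omega>] refl]) (rule act_g_meas)
      have agy: "act g \<in> measurable (\<eta> \<omega>) S"
        by (subst measurable_cong_sets[OF k_sets[OF rm\<eta> \<omega>] refl]) (rule act_g_meas)
      have Y1: "Y (\<theta> g \<omega>) = (\<integral>\<^sup>+t. \<integral>\<^sup>+s. H (\<theta> g \<omega>) s t \<partial>distr (\<xi> \<omega>) S (act g) \<partial>distr (\<eta> \<omega>) S (act g))"
        unfolding Y_def using gd by (simp add: kmod_def shift[OF \<xi> \<omega>] shift[OF \<eta> \<omega>])
      also have "\<dots> = (\<integral>\<^sup>+t. \<integral>\<^sup>+s. H (\<theta> g \<omega>) (act g s) t \<partial>\<xi> \<omega> \<partial>distr (\<eta> \<omega>) S (act g))"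
      proof (rule nn_integral_cong)
        fix t assume "t \<in> space (distr (\<eta> \<omega>) S (act g))"
        then have t: "t \<in> space S" by simp
        have "(\<lambda>s. H (\<theta> g \<omega>) s t) \<in> borel_measurable S"
          by (rule meas3_rule[OF Hm]) (use t\<omega> t in auto)
        then show "(\<integral>\<^sup>+s. H (\<theta> g \<omega>) s t \<partial>distr (\<xi> \<omega>) S (act g)) = (\<integral>\<^sup>+s. H (\<theta> g \<omega>) (act g s) t \<partial>\<xi> \<omega>)"
          by (intro nn_integral_distr[OF agx]) simp
      qed
      also have "\<dots> = (\<integral>\<^sup>+t. \<integral>\<^sup>+s. H (\<theta> g \<omega>) (act g s) (act g t) \<partial>\<xi> \<omega> \<partial>\<eta> \<omega>)"
      proof (rule nn_integral_distr[OF agy])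
        have "(\<lambda>(t, s). H (\<theta> g \<omega>) (act g s) t) \<in> borel_measurable (S \<Otimes>\<^sub>M S)"
          using meas3_rule[OF Hm, of "\<lambda>_. \<theta> g \<omega>" "S \<Otimes>\<^sub>M S" "\<lambda>p. act g (snd p)" "fst"] t\<omega>
          by (simp add: case_prod_beta') measurable
        from KMc[OF rm\<xi> _ this] gd show "(\<lambda>t. \<integral>\<^sup>+s. H (\<theta> g \<omega>) (act g s) t \<partial>\<xi> \<omega>) \<in> borel_measurable (distr (\<eta> \<omega>) S (act g))" by simp
      qed
      finally show "Y (\<theta> g \<omega>) = (\<integral>\<^sup>+t. \<integral>\<^sup>+s. H (\<theta> g \<omega>) (act g s) (act g t) \<partial>\<xi> \<omega> \<partial>\<eta> \<omega>)" .
    qed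
  qed
  finally show ?thesis .
qed

lemma TON:
  assumes gx: "\<omega> \<in> good P S \<xi>" and gy: "\<omega> \<in> good P S \<eta>"
    and Fm: "(\<lambda>(g,s,t). F g s t) \<in> borel_measurable (lam \<Otimes>\<^sub>M S \<Otimes>\<^sub>M S)"
  shows "(\<integral>\<^sup>+t. \<integral>\<^sup>+s. \<integral>\<^sup>+g. F g s t \<partial>lam \<partial>\<xi> \<omega> \<partial>\<eta> \<omega>) = (\<integral>\<^sup>+g. \<integral>\<^sup>+t. \<integral>\<^sup>+s. F g s t \<partial>\<xi> \<omega> \<partial>\<eta> \<omega> \<partial>lam)"
proof -
  have \<omega>: "\<omega> \<in> space P" using gx unfolding good_def by auto
  interpret X: sigma_finite_measure "\<xi> \<omega>" by (rule good_sigma_finite[OF rm\<xi> gx])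
  interpret Y: sigma_finite_measure "\<eta> \<omega>" by (rule good_sigma_finite[OF rm\<eta> gy])
  interpret LX: pair_sigma_finite lam "\<xi> \<omega>" by unfold_locales
  interpret LY: pair_sigma_finite lam "\<eta> \<omega>" by unfold_locales
  have sx: "sets (\<xi> \<omega>) = sets S" by (rule k_sets[OF rm\<xi> \<omega>])
  have sy: "sets (\<eta> \<omega>) = sets S" by (rule k_sets[OF rm\<eta> \<omega>])
  have "(\<integral>\<^sup>+t. \<integral>\<^sup>+s. \<integral>\<^sup>+g. F g s t \<partial>lam \<partial>\<xi> \<omega> \<partial>\<eta> \<omega>) = (\<integral>\<^sup>+t. \<integral>\<^sup>+g. \<integral>\<^sup>+s. F g s t \<partial>\<xi> \<omega> \<partial>lam \<partial>\<eta> \<omega>)"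
  proof (rule nn_integral_cong)
    fix t assume "t \<in> space (\<eta> \<omega>)"
    then have t: "t \<in> space S" using k_space[OF rm\<eta> \<omega>] by simp
    have "(\<lambda>(g, s). F g s t) \<in> borel_measurable (lam \<Otimes>\<^sub>M S)"
      using meas3_rule[OF Fm, of fst "lam \<Otimes>\<^sub>M S" snd "\<lambda>_. t"] t by (simp add: case_prod_beta')
    then have "(\<lambda>(g, s). F g s t) \<in> borel_measurable (lam \<Otimes>\<^sub>M \<xi> \<omega>)"
      by (subst measurable_cong_sets[OF sets_pair_measure_cong[OF refl sx] refl])
    then show "(\<integral>\<^sup>+s. \<integral>\<^sup>+g. F g s t \<partial>lam \<partial>\<xi> \<omega>) = (\<integral>\<^sup>+g. \<integral>\<^sup>+s. F g s t \<partial>\<xi> \<omega> \<partial>lam)"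
      by (rule LX.Fubini')
  qed
  also have "\<dots> = (\<integral>\<^sup>+g. \<integral>\<^sup>+t. \<integral>\<^sup>+s. F g s t \<partial>\<xi> \<omega> \<partial>\<eta> \<omega> \<partial>lam)"
  proof (rule LY.Fubini')
    have "(\<lambda>(y, s). F (fst y) s (snd y)) \<in> borel_measurable ((lam \<Otimes>\<^sub>M S) \<Otimes>\<^sub>M S)"
      using meas3_rule[OF Fm, of "\<lambda>p. fst (fst p)" "(lam \<Otimes>\<^sub>M S) \<Otimes>\<^sub>M S" "snd" "\<lambda>p. snd (fst p)"]
      by (simp add: case_prod_beta')
    then have "(\<lambda>(y, s). F (fst y) s (snd y)) \<in> borel_measurable ((lam \<Otimes>\<^sub>M S) \<Otimes>\<^sub>M \<xi> \<omega>)"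
      by (subst measurable_cong_sets[OF sets_pair_measure_cong[OF refl sx] refl])
    from X.borel_measurable_nn_integral[OF this]
    have "(\<lambda>y. \<integral>\<^sup>+s. F (fst y) s (snd y) \<partial>\<xi> \<omega>) \<in> borel_measurable (lam \<Otimes>\<^sub>M S)" .
    then have "(\<lambda>y. \<integral>\<^sup>+s. F (fst y) s (snd y) \<partial>\<xi> \<omega>) \<in> borel_measurable (lam \<Otimes>\<^sub>M \<eta> \<omega>)"
      by (subst measurable_cong_sets[OF sets_pair_measure_cong[OF refl sy] refl])
    then show "(\<lambda>(g, t). \<integral>\<^sup>+s. F g s t \<partial>\<xi> \<omega>) \<in> borel_measurable (lam \<Otimes>\<^sub>M \<eta> \<omega>)"
      by (simp add: case_prod_beta')
  qed
  finally show ?thesis .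
qed

lemma cp3: "(\<lambda>(x,s,t). F x s t) = (\<lambda>y. F (fst y) (fst (snd y)) (snd (snd y)))" by auto

lemma GL:
  assumes pm: "(\<lambda>(s,t). p s t) \<in> borel_measurable (S \<Otimes>\<^sub>M S)" and qm[measurable]: "q \<in> borel_measurable S"
  shows "(\<integral>\<^sup>+\<omega>. \<integral>\<^sup>+t. \<integral>\<^sup>+s. m \<omega> s t * p s t * mu q t \<partial>\<xi> \<omega> \<partial>\<eta> \<omega> \<partial>P)
       = (\<integral>\<^sup>+\<omega>. \<integral>\<^sup>+t. \<integral>\<^sup>+s. m \<omega> s t * q t * (\<integral>\<^sup>+g. p (act (-g) s) (act (-g) t) \<partial>lam) \<partial>\<xi> \<omega> \<partial>\<eta> \<omega> \<partial>P)"
proof -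
  have p'[measurable (raw)]: "f \<in> measurable M S \<Longrightarrow> g \<in> measurable M S \<Longrightarrow> (\<lambda>x. p (f x) (g x)) \<in> borel_measurable M" for f g M
    using measurable_compose[OF measurable_Pair pm, of f M g] by simp
  interpret LP: pair_sigma_finite lam P by unfold_locales
  define F1 where "F1 g \<omega> s t = m \<omega> s t * p s t * q (act g t)" for g \<omega> s t
  define F2 where "F2 g \<omega> s t = m \<omega> s t * p (act (-g) s) (act (-g) t) * q t" for g \<omega> s t
  define Z1 where "Z1 g \<omega> = (\<integral>\<^sup>+t. \<integral>\<^sup>+s. F1 g \<omega> s t \<partial>kx \<omega> \<partial>ky \<omega>)" for g \<omega>
  define Z2 where "Z2 g \<omega> = (\<integral>\<^sup>+t. \<integral>\<^sup>+s. F2 g \<omega> s t \<partial>kx \<omega> \<partial>ky \<omega>)" for g \<omega>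
  have F1m: "(\<lambda>(x,s,t). F1 (fst x) (snd x) s t) \<in> borel_measurable ((lam \<Otimes>\<^sub>M P) \<Otimes>\<^sub>M S \<Otimes>\<^sub>M S)"
    unfolding cp3 F1_def by measurable
  have F2m: "(\<lambda>(x,s,t). F2 (fst x) (snd x) s t) \<in> borel_measurable ((lam \<Otimes>\<^sub>M P) \<Otimes>\<^sub>M S \<Otimes>\<^sub>M S)"
    unfolding cp3 F2_def by measurable
  have Z1m: "(\<lambda>(g,\<omega>). Z1 g \<omega>) \<in> borel_measurable (lam \<Otimes>\<^sub>M P)"
    using YM[OF measurable_snd F1m] unfolding Z1_def by (simp add: case_prod_beta')
  have Z2m: "(\<lambda>(g,\<omega>). Z2 g \<omega>) \<in> borel_measurable (lam \<Otimes>\<^sub>M P)"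
    using YM[OF measurable_snd F2m] unfolding Z2_def by (simp add: case_prod_beta')
  have AEg: "AE \<omega> in P. \<omega> \<in> good P S \<xi> \<and> \<omega> \<in> good P S \<eta>"
    using AE_good[OF rm\<xi>] AE_good[OF rm\<eta>] by eventually_elim auto
  have A: "(\<integral>\<^sup>+t. \<integral>\<^sup>+s. m \<omega> s t * p s t * mu q t \<partial>\<xi> \<omega> \<partial>\<eta> \<omega>) = (\<integral>\<^sup>+g. Z1 g \<omega> \<partial>lam)"
    if gd: "\<omega> \<in> good P S \<xi> \<and> \<omega> \<in> good P S \<eta>" for \<omega>
  proof -
    have \<omega>: "\<omega> \<in> space P" using gd unfolding good_def by auto
    have "(\<integral>\<^sup>+t. \<integral>\<^sup>+s. m \<omega> s t * p s t * mu q t \<partial>\<xi> \<omega> \<partial>\<eta> \<omega>) = (\<integral>\<^sup>+t. \<integral>\<^sup>+s. \<integral>\<^sup>+g. F1 g \<omega> s t \<partial>lam \<partial>\<xi> \<omega> \<partial>\<eta> \<omega>)"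
    proof (intro nn_integral_cong)
      fix t s assume "t \<in> space (\<eta> \<omega>)"
      then have t: "t \<in> space S" using k_space[OF rm\<eta> \<omega>] by simp
      have "(\<lambda>g. q (act g t)) \<in> borel_measurable lam" using t by measurable
      then show "m \<omega> s t * p s t * mu q t = (\<integral>\<^sup>+g. F1 g \<omega> s t \<partial>lam)"
        unfolding F1_def mu_def by (simp add: nn_integral_cmult)
    qed
    also have "\<dots> = (\<integral>\<^sup>+g. \<integral>\<^sup>+t. \<integral>\<^sup>+s. F1 g \<omega> s t \<partial>\<xi> \<omega> \<partial>\<eta> \<omega> \<partial>lam)"
      by (rule TON) (use gd \<omega> in \<open>auto simp: cp3 F1_def\<close>, measurable)
    also have "\<dots> = (\<integral>\<^sup>+g. Z1 g \<omega> \<partial>lam)" unfolding Z1_def using gd by (simp add: kmod_def)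
    finally show ?thesis .
  qed
  have B: "(\<integral>\<^sup>+t. \<integral>\<^sup>+s. m \<omega> s t * q t * (\<integral>\<^sup>+g. p (act (-g) s) (act (-g) t) \<partial>lam) \<partial>\<xi> \<omega> \<partial>\<eta> \<omega>) = (\<integral>\<^sup>+g. Z2 g \<omega> \<partial>lam)"
    if gd: "\<omega> \<in> good P S \<xi> \<and> \<omega> \<in> good P S \<eta>" for \<omega>
  proof -
    have \<omega>: "\<omega> \<in> space P" using gd unfolding good_def by auto
    have "(\<integral>\<^sup>+t. \<integral>\<^sup>+s. m \<omega> s t * q t * (\<integral>\<^sup>+g. p (act (-g) s) (act (-g) t) \<partial>lam) \<partial>\<xi> \<omega> \<partial>\<eta> \<omega>) = (\<integral>\<^sup>+t. \<integral>\<^sup>+s. \<integral>\<^sup>+g. F2 g \<omega> s t \<partial>lam \<partial>\<xi> \<omega> \<partial>\<eta> \<omega>)"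
    proof (intro nn_integral_cong)
      fix t s assume "t \<in> space (\<eta> \<omega>)" "s \<in> space (\<xi> \<omega>)"
      then have t: "t \<in> space S" and s: "s \<in> space S" using k_space[OF rm\<eta> \<omega>] k_space[OF rm\<xi> \<omega>] by auto
      have "(\<lambda>g. p (act (-g) s) (act (-g) t)) \<in> borel_measurable lam" using t s by measurable
      then show "m \<omega> s t * q t * (\<integral>\<^sup>+g. p (act (-g) s) (act (-g) t) \<partial>lam) = (\<integral>\<^sup>+g. F2 g \<omega> s t \<partial>lam)"
        unfolding F2_def by (simp add: nn_integral_cmult nn_integral_multc ac_simps)
    qed
    also have "\<dots> = (\<integral>\<^sup>+g. \<integral>\<^sup>+t. \<integral>\<^sup>+s. F2 g \<omega> s t \<partial>\<xi> \<omega> \<partial>\<eta> \<omega> \<partial>lam)"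
      by (rule TON) (use gd \<omega> in \<open>auto simp: cp3 F2_def\<close>, measurable)
    also have "\<dots> = (\<integral>\<^sup>+g. Z2 g \<omega> \<partial>lam)" unfolding Z2_def using gd by (simp add: kmod_def)
    finally show ?thesis .
  qed
  have C: "(\<integral>\<^sup>+\<omega>. Z1 g \<omega> \<partial>P) = (\<integral>\<^sup>+\<omega>. Z2 g \<omega> \<partial>P)" for g
  proof -
    have Hm: "(\<lambda>(\<omega>,s,t). F1 g \<omega> s t) \<in> borel_measurable (P \<Otimes>\<^sub>M S \<Otimes>\<^sub>M S)"
      unfolding cp3 F1_def by measurable
    have "(\<integral>\<^sup>+\<omega>. Z1 g \<omega> \<partial>P) = (\<integral>\<^sup>+\<omega>. \<integral>\<^sup>+t. \<integral>\<^sup>+s. F1 g \<omega> s t \<partial>\<xi> \<omega> \<partial>\<eta> \<omega> \<partial>P)"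
      unfolding Z1_def by (rule E_mod[symmetric])
    also have "\<dots> = (\<integral>\<^sup>+\<omega>. \<integral>\<^sup>+t. \<integral>\<^sup>+s. F1 g (\<theta> (-g) \<omega>) (act (-g) s) (act (-g) t) \<partial>\<xi> \<omega> \<partial>\<eta> \<omega> \<partial>P)"
      by (rule IP[OF Hm])
    also have "\<dots> = (\<integral>\<^sup>+\<omega>. \<integral>\<^sup>+t. \<integral>\<^sup>+s. F2 g \<omega> s t \<partial>\<xi> \<omega> \<partial>\<eta> \<omega> \<partial>P)"
    proof (intro nn_integral_cong)
      fix \<omega> t s assume \<omega>: "\<omega> \<in> space P" and "t \<in> space (\<eta> \<omega>)" "s \<in> space (\<xi> \<omega>)"
      then have t: "t \<in> space S" and s: "s \<in> space S" using k_space[OF rm\<eta> \<omega>] k_space[OF rm\<xi> \<omega>] by auto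
      show "F1 g (\<theta> (-g) \<omega>) (act (-g) s) (act (-g) t) = F2 g \<omega> s t"
        unfolding F1_def F2_def using m_inv[OF \<omega> s t, of "-g"] act_inv[OF t, of g] by simp
    qed
    also have "\<dots> = (\<integral>\<^sup>+\<omega>. Z2 g \<omega> \<partial>P)"
      unfolding Z2_def by (rule E_mod)
    finally show ?thesis .
  qed
  have "(\<integral>\<^sup>+\<omega>. \<integral>\<^sup>+t. \<integral>\<^sup>+s. m \<omega> s t * p s t * mu q t \<partial>\<xi> \<omega> \<partial>\<eta> \<omega> \<partial>P) = (\<integral>\<^sup>+\<omega>. \<integral>\<^sup>+g. Z1 g \<omega> \<partial>lam \<partial>P)"
    using AEg by (intro nn_integral_cong_AE, eventually_elim) (rule A)
  also have "\<dots> = (\<integral>\<^sup>+g. \<integral>\<^sup>+\<omega>. Z1 g \<omega> \<partial>P \<partial>lam)" by (rule LP.Fubini'[OF Z1m])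
  also have "\<dots> = (\<integral>\<^sup>+g. \<integral>\<^sup>+\<omega>. Z2 g \<omega> \<partial>P \<partial>lam)" by (simp add: C)
  also have "\<dots> = (\<integral>\<^sup>+\<omega>. \<integral>\<^sup>+g. Z2 g \<omega> \<partial>lam \<partial>P)" by (rule LP.Fubini'[OF Z2m, symmetric])
  also have "\<dots> = (\<integral>\<^sup>+\<omega>. \<integral>\<^sup>+t. \<integral>\<^sup>+s. m \<omega> s t * q t * (\<integral>\<^sup>+g. p (act (-g) s) (act (-g) t) \<partial>lam) \<partial>\<xi> \<omega> \<partial>\<eta> \<omega> \<partial>P)"
    using AEg by (intro nn_integral_cong_AE, eventually_elim) (rule B[symmetric])
  finally show ?thesis .
qed

end


theorem corollary6p10:
  fixes lam :: "'g::{topological_group_add, second_countable_topology, t2_space} measure"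
    and S :: "'s measure" and act :: "'g \<Rightarrow> 's \<Rightarrow> 's" and Orb :: "'s set"
    and \<theta> :: "'g \<Rightarrow> 'w \<Rightarrow> 'w" and P :: "'w measure"
    and v w :: "'s \<Rightarrow> ennreal"
    and \<xi> \<eta> :: "'w \<Rightarrow> 's measure" and m :: "'w \<Rightarrow> 's \<Rightarrow> 's \<Rightarrow> ennreal"
  assumes G: "lcsc_group TYPE('g)"
    and haar: "left_haar lam"
    and S_borel: "borel_space S"
    and act: "measurable_action TYPE('g) S act"
    and proper: "proper_action lam S act"
    and Orb: "orbit_representatives S act Orb"
    and \<theta>: "measurable_action TYPE('g) P \<theta>"
    and P_sigma: "sigma_finite_measure P"
    and P_inv: "\<And>g. distr P P (\<theta> g) = P"
    and v_meas: "v \<in> borel_measurable S" and w_meas: "w \<in> borel_measurable S"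
    and v_pos: "\<And>s. s \<in> space S \<Longrightarrow> 0 < (\<integral>\<^sup>+ x. v x \<partial>orbit_measure lam S act s)
                         \<and> (\<integral>\<^sup>+ x. v x \<partial>orbit_measure lam S act s) < \<infinity>"
    and w_pos: "\<And>s. s \<in> space S \<Longrightarrow> 0 < (\<integral>\<^sup>+ x. w x \<partial>orbit_measure lam S act s)
                         \<and> (\<integral>\<^sup>+ x. w x \<partial>orbit_measure lam S act s) < \<infinity>"
    and ratio: "\<And>b b'. b \<in> Orb \<Longrightarrow> b' \<in> Orb \<Longrightarrow>
        (\<integral>\<^sup>+ x. w x \<partial>orbit_measure lam S act b) / (\<integral>\<^sup>+ x. v x \<partial>orbit_measure lam S act b)
      = (\<integral>\<^sup>+ x. w x \<partial>orbit_measure lam S act b') / (\<integral>\<^sup>+ x. v x \<partial>orbit_measure lam S act b')"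
    and \<xi>: "invariant_random_measure P S \<theta> act \<xi>"
    and \<eta>: "invariant_random_measure P S \<theta> act \<eta>"
    and m: "invariant_kernel_fn P S \<theta> act m"
  shows "(\<integral>\<^sup>+ \<omega>. (\<integral>\<^sup>+ t. (\<integral>\<^sup>+ s. Delta lam S act v s t * w s * m \<omega> s t \<partial>\<xi> \<omega>) \<partial>\<eta> \<omega>) \<partial>P)
       = (\<integral>\<^sup>+ \<omega>. (\<integral>\<^sup>+ t. (\<integral>\<^sup>+ s. w t * m \<omega> s t \<partial>\<xi> \<omega>) \<partial>\<eta> \<omega>) \<partial>P)"
proof -
  interpret rset lam S act P \<theta> \<xi> \<eta> m
    by (rule rset.intro[OF gset.intro[OF G haar act] rset_axioms.intro[OF \<theta> P_sigma P_inv \<xi> \<eta> m]])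
  note [measurable] = v_meas w_meas
  have vpos': "\<And>s. s \<in> space S \<Longrightarrow> 0 < mu v s \<and> mu v s < \<infinity>"
    using v_pos by (simp add: orbit_nn[OF v_meas])
  define \<nu> where "\<nu> s = (\<integral>\<^sup>+g. w (act (-g) s) / mu v (act (-g) s) \<partial>lam)" for s
  have \<nu>_eq: "\<nu> s = mu w s / mu v s" if s: "s \<in> space S" for s
  proof -
    have "mu w s = mu v s * \<nu> s" unfolding \<nu>_def by (rule lemmaN[OF v_meas w_meas vpos' s])
    moreover have "mu v s * inverse (mu v s) = 1" using vpos'[OF s] by (intro ennreal_mult_inverse_self) auto
    ultimately show ?thesis unfolding divide_ennreal_def by (metis mult.assoc mult.commute mult_1)
  qed
  have \<nu>_inv: "\<nu> (act g s) = \<nu> s" if s: "s \<in> space S" for g s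
    unfolding \<nu>_def by (rule nu_inv[of "\<lambda>x. w x / mu v x"]) (use s in measurable)
  have Orb_sub: "Orb \<subseteq> space S" using Orb unfolding orbit_representatives_def by (auto dest: sets.sets_into_space)
  have \<nu>_rep: "\<exists>b\<in>Orb. \<nu> s = mu w b / mu v b" if s: "s \<in> space S" for s
  proof -
    obtain b g where b: "b \<in> Orb" "act g s = b" using Orb s unfolding orbit_representatives_def by blast
    then have "\<nu> s = \<nu> b" using \<nu>_inv[OF s, of g] by simp
    also have "\<dots> = mu w b / mu v b" using \<nu>_eq b Orb_sub by auto
    finally show ?thesis using b by blast
  qed
  have \<nu>_const: "\<nu> s = \<nu> t" if s: "s \<in> space S" and t: "t \<in> space S" for s t
  proof -
    obtain b where b: "b \<in> Orb" "\<nu> s = mu w b / mu v b" using \<nu>_rep[OF s] by blast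
    obtain b' where b': "b' \<in> Orb" "\<nu> t = mu w b' / mu v b'" using \<nu>_rep[OF t] by blast
    have "mu w b / mu v b = mu w b' / mu v b'"
    proof -
      have bS: "b \<in> space S" "b' \<in> space S" using b(1) b'(1) Orb_sub by auto
      show ?thesis
        using ratio[OF b(1) b'(1)] orbit_nn[OF v_meas bS(1)] orbit_nn[OF w_meas bS(1)]
          orbit_nn[OF v_meas bS(2)] orbit_nn[OF w_meas bS(2)] by simp
    qed
    then show ?thesis using b b' by simp
  qed
  have sp: "\<And>\<omega>. \<omega> \<in> space P \<Longrightarrow> space (\<xi> \<omega>) = space S" "\<And>\<omega>. \<omega> \<in> space P \<Longrightarrow> space (\<eta> \<omega>) = space S"
    using k_space[OF rm\<xi>] k_space[OF rm\<eta>] by auto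
  have "(\<integral>\<^sup>+ \<omega>. (\<integral>\<^sup>+ t. (\<integral>\<^sup>+ s. Delta lam S act v s t * w s * m \<omega> s t \<partial>\<xi> \<omega>) \<partial>\<eta> \<omega>) \<partial>P)
      = (\<integral>\<^sup>+\<omega>. \<integral>\<^sup>+t. \<integral>\<^sup>+s. m \<omega> s t * (w s / mu v s) * mu v t \<partial>\<xi> \<omega> \<partial>\<eta> \<omega> \<partial>P)"
  proof (intro nn_integral_cong)
    fix \<omega> t s assume \<omega>: "\<omega> \<in> space P" and "t \<in> space (\<eta> \<omega>)" "s \<in> space (\<xi> \<omega>)"
    then have t: "t \<in> space S" and s: "s \<in> space S" using sp by auto
    show "Delta lam S act v s t * w s * m \<omega> s t = m \<omega> s t * (w s / mu v s) * mu v t"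
      unfolding Delta_def using s t by (simp add: orbit_nn divide_ennreal_def ac_simps)
  qed
  also have "\<dots> = (\<integral>\<^sup>+\<omega>. \<integral>\<^sup>+t. \<integral>\<^sup>+s. m \<omega> s t * v t * \<nu> s \<partial>\<xi> \<omega> \<partial>\<eta> \<omega> \<partial>P)"
    unfolding \<nu>_def by (rule GL[of "\<lambda>s t. w s / mu v s" v]) measurable
  also have "\<dots> = (\<integral>\<^sup>+\<omega>. \<integral>\<^sup>+t. \<integral>\<^sup>+s. m \<omega> s t * v t * \<nu> t \<partial>\<xi> \<omega> \<partial>\<eta> \<omega> \<partial>P)"
  proof (intro nn_integral_cong)
    fix \<omega> t s assume \<omega>: "\<omega> \<in> space P" and "t \<in> space (\<eta> \<omega>)" "s \<in> space (\<xi> \<omega>)"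
    then have t: "t \<in> space S" and s: "s \<in> space S" using sp by auto
    show "m \<omega> s t * v t * \<nu> s = m \<omega> s t * v t * \<nu> t" using \<nu>_const[OF s t] by simp
  qed
  also have "\<dots> = (\<integral>\<^sup>+\<omega>. \<integral>\<^sup>+t. \<integral>\<^sup>+s. m \<omega> s t * (w t / mu v t) * mu v t \<partial>\<xi> \<omega> \<partial>\<eta> \<omega> \<partial>P)"
    unfolding \<nu>_def by (rule GL[of "\<lambda>s t. w t / mu v t" v, symmetric]) measurable
  also have "\<dots> = (\<integral>\<^sup>+ \<omega>. (\<integral>\<^sup>+ t. (\<integral>\<^sup>+ s. w t * m \<omega> s t \<partial>\<xi> \<omega>) \<partial>\<eta> \<omega>) \<partial>P)"
  proof (intro nn_integral_cong)
    fix \<omega> t s assume \<omega>: "\<omega> \<in> space P" and "t \<in> space (\<eta> \<omega>)" "s \<in> space (\<xi> \<omega>)"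
    then have t: "t \<in> space S" and s: "s \<in> space S" using sp by auto
    have "mu v t * inverse (mu v t) = 1" using vpos'[OF t] by (intro ennreal_mult_inverse_self) auto
    then show "m \<omega> s t * (w t / mu v t) * mu v t = w t * m \<omega> s t"
      unfolding divide_ennreal_def by (metis mult.assoc mult.commute mult_1)
  qed
  finally show ?thesis .
qed


end
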